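(* Let $n\ge 1$ and let $\epsilon_0,\epsilon_1,\ldots,\epsilon_n$ be real numbers with $0<\epsilon_i\le 1$ for $i=0,1,\ldots,n$. Then for every symmetric pseudo-Boolean function $f:\{0,1\}^n\to\mathbb{R}$ there exists a unique vector $(\alpha_0,\alpha_1,\ldots,\alpha_n)\in\mathbb{R}^{n+1}$ such that \[ f(x)=\sum_{i=0}^{n}\alpha_i\,\min\Bigl(0,\; i-\epsilon_i-\sum_{r=1}^n x_r\Bigr)\quad\text{for all }x\in\{0,1\}^n. \]
   Context: A pseudo-Boolean function is a map $f:\{0,1\}^n\to\mathbb{R}$. It is symmetric if its value depends only on the Hamming weight $|x|=\sum_{j=1}^n x_j$ of $x$, i.e. there is $k:\{0,1,\ldots,n\}\to\mathbb{R}$ with $f(x)=k(|x|)$ for all $x$. *)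

theory Defs
  imports Complex_Main
begin

text \<open>The Boolean cube {0,1}^n, with points represented as functions on the
index set {1..n} (extended by 0 outside, so that each point has a unique representation).\<close>
definition bool_cube :: "nat \<Rightarrow> (nat \<Rightarrow> real) set" where
  "bool_cube n = {x. (\<forall>j\<in>{1..n}. x j \<in> {0, 1}) \<and> (\<forall>j. j \<notin> {1..n} \<longrightarrow> x j = 0)}"

definition hweight :: "nat \<Rightarrow> (nat \<Rightarrow> real) \<Rightarrow> real" where
  "hweight n x = (\<Sum>r=1..n. x r)"

definition symmetric_pbf :: "nat \<Rightarrow> ((nat \<Rightarrow> real) \<Rightarrow> real) \<Rightarrow> bool" where
  "symmetric_pbf n f \<longleftrightarrow>
     (\<exists>k :: real \<Rightarrow> real. \<forall>x\<in>bool_cube n. f x = k (hweight n x))"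

end

theory Submission
  imports Defs
begin

function solv :: "(nat\<Rightarrow>real) \<Rightarrow> (nat \<Rightarrow> real) \<Rightarrow> nat \<Rightarrow> real" where
"solv e K w = (K w - (\<Sum>i<w. solv e K i * min 0 (real i - e i - real w))) / min 0 (real w - e w - real w)"
  by auto
termination by (relation "measure (\<lambda>(e,K,w). w)") auto

declare solv.simps[simp del]

lemma minlem:
  assumes "0 < e" "e \<le> 1"
  shows "min 0 (real i - e - real w) = (if i \<le> w then real i - e - real w else 0)"
proof (cases "i \<le> w")
  case True
  then have "real i \<le> real w" by simp
  then show ?thesis using True assms by simp
next
  case False
  then have "real i \<ge> real w + 1" by simp
  then show ?thesis using False assms by simp
qed

definition pt :: "nat \<Rightarrow> nat \<Rightarrow> real" where
  "pt w j = (if 1 \<le> j \<and> j \<le> w then 1 else 0)"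

lemma pt_cube: "w \<le> n \<Longrightarrow> pt w \<in> bool_cube n"
  by (auto simp: bool_cube_def pt_def)

lemma pt_weight: "w \<le> n \<Longrightarrow> (\<Sum>r=1..n. pt w r) = real w"
proof -
  assume w: "w \<le> n"
  have "(\<Sum>r=1..n. pt w r) = (\<Sum>r=1..w. pt w r)"
      proof -
    have z: "\<forall>i\<in>{1..n} - {1..w}. pt w i = 0" by (auto simp: pt_def)
    have sub: "{1..w} \<subseteq> {1..n}" using w by auto
    show ?thesis using sum.mono_neutral_right[OF finite_atLeastAtMost sub z] by simp
  qed
  also have "\<dots> = (\<Sum>r=1..w. 1)" by (rule sum.cong) (auto simp: pt_def)
  finally show ?thesis by simp
qed

lemma cube_weight:
  assumes "x \<in> bool_cube n"
  shows "\<exists>w\<le>n. (\<Sum>r=1..n. x r) = real w"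
proof -
  have "(\<Sum>r=1..n. x r) = (\<Sum>r\<in>{1..n}. if r \<in> {r. x r = 1} then 1 else 0)"
    by (rule sum.cong) (use assms in \<open>auto simp: bool_cube_def\<close>)
  also have "\<dots> = real (card ({1..n} \<inter> {r. x r = 1}))"
    by (simp add: sum.If_cases)
  finally have e: "(\<Sum>r=1..n. x r) = real (card ({1..n} \<inter> {r. x r = 1}))" .
  have "card ({1..n} \<inter> {r. x r = 1}) \<le> card {1..n}"
    by (rule card_mono) auto
  then show ?thesis using e by auto
qed

theorem theorem1:
  fixes n :: nat and \<epsilon> :: "nat \<Rightarrow> real" and f :: "(nat \<Rightarrow> real) \<Rightarrow> real"
  assumes "n \<ge> 1"
    and "\<forall>i\<in>{0..n}. 0 < \<epsilon> i \<and> \<epsilon> i \<le> 1"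
    and "symmetric_pbf n f"
  shows "\<exists>!\<alpha> :: nat \<Rightarrow> real. (\<forall>i. i > n \<longrightarrow> \<alpha> i = 0) \<and>
           (\<forall>x\<in>bool_cube n. f x = (\<Sum>i=0..n. \<alpha> i * min 0 (real i - \<epsilon> i - (\<Sum>r=1..n. x r))))"
proof -
  obtain k where k: "\<forall>x\<in>bool_cube n. f x = k (hweight n x)"
    using assms(3) unfolding symmetric_pbf_def by blast
  define M where "M w i = min 0 (real i - \<epsilon> i - real w)" for w i
  have Mif: "M w i = (if i \<le> w then real i - \<epsilon> i - real w else 0)" if "i \<le> n" for w i
    unfolding M_def using assms(2) that by (intro minlem) auto
  have Mdiag: "M w w \<noteq> 0" if "w \<le> n" for w
  proof -
    have "0 < \<epsilon> w" using assms(2) that by auto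
    then show ?thesis using Mif[OF that, of w] by simp
  qed
  have split: "(\<Sum>i=0..n. a i * M w i) = (\<Sum>i<w. a i * M w i) + a w * M w w"
    if "w \<le> n" for a w
  proof -
    have "(\<Sum>i=0..n. a i * M w i) = (\<Sum>i\<in>{0..n}. if i \<in> {..w} then a i * M w i else 0)"
      by (rule sum.cong) (auto simp: Mif)
    also have "\<dots> = (\<Sum>i\<in>{..w}. a i * M w i)"
      by (simp add: sum.If_cases) (rule sum.cong, use that in auto)
    also have "\<dots> = (\<Sum>i<w. a i * M w i) + a w * M w w"
      by (simp add: lessThan_Suc_atMost[symmetric])
    finally show ?thesis .
  qed
  define K where "K w = k (real w)" for w
  define \<alpha> where "\<alpha> i = (if i \<le> n then solv \<epsilon> K i else 0)" for i
  have eqK: "(\<Sum>i=0..n. \<alpha> i * M w i) = K w" if "w \<le> n" for w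
  proof -
    have "(\<Sum>i<w. \<alpha> i * M w i) = (\<Sum>i<w. solv \<epsilon> K i * M w i)"
      by (rule sum.cong) (use that in \<open>auto simp: \<alpha>_def\<close>)
    moreover have "\<alpha> w = (K w - (\<Sum>i<w. solv \<epsilon> K i * M w i)) / M w w"
      using that unfolding \<alpha>_def M_def by (simp add: solv.simps[of _ _ w])
    ultimately show ?thesis using split[OF that] Mdiag[OF that] by simp
  qed
  have red: "(\<forall>x\<in>bool_cube n. f x = (\<Sum>i=0..n. a i * min 0 (real i - \<epsilon> i - (\<Sum>r=1..n. x r))))
      \<longleftrightarrow> (\<forall>w\<le>n. (\<Sum>i=0..n. a i * M w i) = K w)" for a
  proof
    assume h: "\<forall>x\<in>bool_cube n. f x = (\<Sum>i=0..n. a i * min 0 (real i - \<epsilon> i - (\<Sum>r=1..n. x r)))"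
    show "\<forall>w\<le>n. (\<Sum>i=0..n. a i * M w i) = K w"
    proof (intro allI impI)
      fix w assume w: "w \<le> n"
      have "f (pt w) = k (real w)" using k pt_cube[OF w] pt_weight[OF w]
        by (simp add: hweight_def)
      then show "(\<Sum>i=0..n. a i * M w i) = K w"
        using h pt_cube[OF w] pt_weight[OF w] by (simp add: M_def K_def)
    qed
  next
    assume h: "\<forall>w\<le>n. (\<Sum>i=0..n. a i * M w i) = K w"
    show "\<forall>x\<in>bool_cube n. f x = (\<Sum>i=0..n. a i * min 0 (real i - \<epsilon> i - (\<Sum>r=1..n. x r)))"
    proof
      fix x assume x: "x \<in> bool_cube n"
      obtain w where w: "w \<le> n" "(\<Sum>r=1..n. x r) = real w" using cube_weight[OF x] by blast
      have "f x = K w" using k x w by (simp add: hweight_def K_def)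
      then show "f x = (\<Sum>i=0..n. a i * min 0 (real i - \<epsilon> i - (\<Sum>r=1..n. x r)))"
        using h w by (simp add: M_def)
    qed
  qed
  show ?thesis
    unfolding red
  proof (rule ex1I[of _ \<alpha>])
    show "(\<forall>i. i > n \<longrightarrow> \<alpha> i = 0) \<and> (\<forall>w\<le>n. (\<Sum>i=0..n. \<alpha> i * M w i) = K w)"
      using eqK by (auto simp: \<alpha>_def)
  next
    fix \<beta> assume hb: "(\<forall>i. i > n \<longrightarrow> \<beta> i = 0) \<and> (\<forall>w\<le>n. (\<Sum>i=0..n. \<beta> i * M w i) = K w)"
    have "\<beta> w = \<alpha> w" for w
    proof (induction w rule: less_induct)
      case (less w)
      show ?case
      proof (cases "w \<le> n")
        case False then show ?thesis using hb by (auto simp: \<alpha>_def)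
      next
        case True
        have s: "(\<Sum>i<w. \<beta> i * M w i) = (\<Sum>i<w. \<alpha> i * M w i)"
          by (rule sum.cong) (use less in auto)
        have "(\<Sum>i=0..n. \<beta> i * M w i) = (\<Sum>i=0..n. \<alpha> i * M w i)"
          using hb eqK True by simp
        then have "\<beta> w * M w w = \<alpha> w * M w w" using split[OF True] s by simp
        then show ?thesis using Mdiag[OF True] by simp
      qed
    qed
    then show "\<beta> = \<alpha>" by auto
  qed
qed

end
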